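(* Let $G$ be a signed digraph with vertex set $V$, $f$ a Boolean network on $G$, $i\in V$ and $a\in\{0,1\}$. Let $w$ be a canalizing word from $(i,a)$ with image $b$, and suppose no source of $G$ belongs to $\{w\}$. Then for every $j\in\{w\}$, $G$ has a path from $i$ to $j$ whose internal vertices are in $\{w\}$, which is positive if $a=b_j$ and negative otherwise.
   Context: A signed digraph on $V$ is $(V,E)$ with $E\subseteq V\times V\times\{-1,1\}$. Paths have no repeated vertices and are signed by the product of arc signs. A source is a vertex of in-degree zero. A Boolean network (BN) is $f:\{0,1\}^V\to\{0,1\}^V$; its signed interaction digraph has a positive (negative) arc from $j$ to $k$ iff for some $x$ with $x_j=0$, $f_k(x+e_j)-f_k(x)$ is positive (negative). A BN on $G$ is one whose signed interaction digraph is $G$. $f^k(x)$ is $x$ with $x_k$ replaced by $f_k(x)$; $f^{i_1\cdots i_\ell}=f^{i_\ell}\circ\cdots\circ f^{i_1}$; $\{w\}$ is the set of letters of $w$. A canalizing word from $(i,a)$ is a word $w$ over $V\setminus\{i\}$ without repeated letters such that for some configuration $b$ on $\{w\}$ (called the image of $w$), every $x\in\{0,1\}^V$ with $x_i=a$ satisfies $f^w(x)_{\{w\}}=b$. *)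

theory Defs
  imports Main
begin

text \<open>Vertices range over a finite type 'v (the vertex set V is UNIV).
  Boolean states are encoded as bool (False = 0, True = 1).\<close>

type_synonym 'v sdigraph = "('v \<times> 'v \<times> int) set"
type_synonym 'v config = "'v \<Rightarrow> bool"
type_synonym 'v bn = "'v config \<Rightarrow> 'v config"

definition signed_digraph :: "'v sdigraph \<Rightarrow> bool" where
  "signed_digraph E \<longleftrightarrow> (\<forall>(u, v, s) \<in> E. s = 1 \<or> s = -1)"

text \<open>Signed interaction digraph of a BN: positive arc j\<rightarrow>k iff for some x with x_j = 0,
  f_k(x + e_j) - f_k(x) > 0 (i.e. f_k goes 0 \<rightarrow> 1); negative iff it is < 0.\<close>
definition interaction_digraph :: "'v bn \<Rightarrow> 'v sdigraph" where
  "interaction_digraph f =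
     {(j, k, 1) | j k. \<exists>x. \<not> x j \<and> \<not> f x k \<and> f (x(j := True)) k} \<union>
     {(j, k, -1) | j k. \<exists>x. \<not> x j \<and> f x k \<and> \<not> f (x(j := True)) k}"

definition bn_on :: "'v bn \<Rightarrow> 'v sdigraph \<Rightarrow> bool" where
  "bn_on f E \<longleftrightarrow> interaction_digraph f = E"

definition is_source :: "'v sdigraph \<Rightarrow> 'v \<Rightarrow> bool" where
  "is_source E k \<longleftrightarrow> \<not> (\<exists>u s. (u, k, s) \<in> E)"

definition is_path :: "'v sdigraph \<Rightarrow> 'v list \<Rightarrow> int list \<Rightarrow> bool" where
  "is_path E vs ss \<longleftrightarrow> vs \<noteq> [] \<and> distinct vs \<and> length vs = Suc (length ss) \<and>
     (\<forall>l < length ss. (vs ! l, vs ! Suc l, ss ! l) \<in> E)"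

definition path_sign :: "int list \<Rightarrow> int" where
  "path_sign ss = prod_list ss"

definition internal_vertices :: "'v list \<Rightarrow> 'v set" where
  "internal_vertices vs = {vs ! l | l. 0 < l \<and> Suc l < length vs}"

definition upd :: "'v bn \<Rightarrow> 'v \<Rightarrow> 'v config \<Rightarrow> 'v config" where
  "upd f k x = x(k := f x k)"

text \<open>f^{i_1...i_l} = f^{i_l} o ... o f^{i_1}: the first letter is applied first.\<close>
definition upd_word :: "'v bn \<Rightarrow> 'v list \<Rightarrow> 'v config \<Rightarrow> 'v config" where
  "upd_word f w = fold (upd f) w"

definition canalizing_word :: "'v bn \<Rightarrow> 'v \<Rightarrow> bool \<Rightarrow> 'v list \<Rightarrow> 'v config \<Rightarrow> bool" where
  "canalizing_word f i a w b \<longleftrightarrow> distinct w \<and> i \<notin> set w \<and>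
     (\<forall>x. x i = a \<longrightarrow> (\<forall>j \<in> set w. upd_word f w x j = b j))"

end

theory Submission
  imports Defs
begin

lemma sgn_aux: "(if a = (bl::bool) then 1 else -1) * (if bl = (bj::bool) then 1 else -1) = (if a = bj then (1::int) else -1)"
  by (cases a; cases bl; cases bj) (simp_all only: if_True if_False simp_thms mult_1_left mult_1_right mult_minus1 minus_minus)

lemma path2: "(i, j, s) \<in> E \<Longrightarrow> i \<noteq> j \<Longrightarrow> is_path E [i, j] [s]"
  unfolding is_path_def by (simp add: less_Suc_eq)

lemma internal2: "internal_vertices [i, j] = {}" unfolding internal_vertices_def by auto

lemma flip_find:
  assumes "finite I"
  shows "\<forall>v. v \<notin> I \<longrightarrow> z v = z' v \<Longrightarrow> f z' j \<noteq> \<beta> \<Longrightarrow> f z j = \<beta> \<Longrightarrow>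
     \<exists>l\<in>I. \<exists>y. f y j \<noteq> \<beta> \<and> f (y(l := z l)) j = \<beta>"
  using assms
proof (induction I arbitrary: z' rule: finite_induct)
  case empty
  then have "z = z'" by auto
  then show ?case using empty by auto
next
  case (insert l I)
  define m where "m = z'(l := z l)"
  show ?case
  proof (cases "f m j = \<beta>")
    case True
    then show ?thesis using insert(5) unfolding m_def by blast
  next
    case False
    have "\<forall>v. v \<notin> I \<longrightarrow> z v = m v" using insert(4) unfolding m_def by auto
    from insert(3)[OF this False insert(6)] show ?thesis by blast
  qed
qed

lemma arc_in:
  assumes "\<not> x l" "f x j \<noteq> f (x(l:=True)) j"
  shows "(l, j, if f (x(l:=True)) j then 1 else -1) \<in> interaction_digraph f"
proof (cases "f (x(l:=True)) j")
  case True
  then have "\<not> f x j" using assms(2) by blast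
  then have "(l, j, 1) \<in> {(j, k, 1) | j k. \<exists>x. \<not> x j \<and> \<not> f x k \<and> f (x(j := True)) k}"
    using assms(1) True by blast
  then show ?thesis unfolding interaction_digraph_def if_P[OF True] by (rule UnI1)
next
  case False
  then have "f x j" using assms(2) by blast
  then have "(l, j, -1) \<in> {(j, k, -1) | j k. \<exists>x. \<not> x j \<and> f x k \<and> \<not> f (x(j := True)) k}"
    using assms(1) False by blast
  then show ?thesis unfolding interaction_digraph_def if_not_P[OF False] by (rule UnI2)
qed

lemma arc_from_flip:
  assumes "f y j \<noteq> \<beta>" "f (y(l := c)) j = \<beta>"
  shows "(l, j, if c = \<beta> then 1 else -1) \<in> interaction_digraph f"
proof (cases c)
  case True
  have e: "f (y(l:=True)) j = \<beta>" using assms(2) True by simp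
  have ny: "\<not> y l"
  proof
    assume "y l"
    then have "y(l:=True) = y" using fun_upd_triv[of y l] by simp
    then show False using e assms(1) by simp
  qed
  have d: "f y j \<noteq> f (y(l:=True)) j" using assms(1) e by simp
  have "(if f (y(l:=True)) j then 1 else -1) = (if c = \<beta> then 1 else (-1::int))"
    unfolding e using True by simp
  then show ?thesis using arc_in[of y l f j, OF ny d] by simp
next
  case False
  have e: "f (y(l:=False)) j = \<beta>" using assms(2) False by simp
  have yl: "y l"
  proof (rule ccontr)
    assume "\<not> y l"
    then have "y(l:=False) = y" using fun_upd_triv[of y l] by simp
    then show False using e assms(1) by simp
  qed
  define x where "x = y(l := False)"
  have xy: "x(l := True) = y" unfolding x_def using yl fun_upd_triv[of y l] by simp
  have nx: "\<not> x l" unfolding x_def by simp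
  have ex: "f x j = \<beta>" unfolding x_def by (rule e)
  have d: "f x j \<noteq> f (x(l:=True)) j" unfolding xy using ex assms(1) by simp
  have "(if f (x(l:=True)) j then 1 else -1) = (if c = \<beta> then 1 else (-1::int))"
    unfolding xy using ex e False assms(1) by (cases \<beta>) simp_all
  then show ?thesis using arc_in[of x l f j, OF nx d] by simp
qed

lemma fold_other: "v \<notin> set ws \<Longrightarrow> fold (upd f) ws x v = x v"
  by (induction ws arbitrary: x) (auto simp: upd_def)

lemma dist_parts:
  assumes "distinct w" "k < length w"
  shows "w!k \<notin> set (drop (Suc k) w)" "w!k \<notin> set (take k w)"
proof -
  have w: "w = take k w @ w!k # drop (Suc k) w" using assms by (simp add: id_take_nth_drop)
  have "distinct (take k w @ w!k # drop (Suc k) w)" using assms(1) by (simp only: id_take_nth_drop[OF assms(2), symmetric])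
  then show "w!k \<notin> set (drop (Suc k) w)" "w!k \<notin> set (take k w)" by auto
qed

lemma canal_step:
  assumes cw: "canalizing_word f i a w b" and kl: "k < length w"
    and xi: "x i = a"
  shows "f (fold (upd f) (take k w) x) (w!k) = b (w!k)"
proof -
  have d: "distinct w" using cw unfolding canalizing_word_def by simp
  have "upd_word f w x (w!k) = b (w!k)" using cw xi kl unfolding canalizing_word_def by auto
  moreover have "upd_word f w x = fold (upd f) (drop (Suc k) w) (upd f (w!k) (fold (upd f) (take k w) x))"
  proof -
    have "fold (upd f) w x = fold (upd f) (take k w @ w!k # drop (Suc k) w) x"
      by (simp only: id_take_nth_drop[OF kl, symmetric])
    then show ?thesis unfolding upd_word_def by simp
  qed
  ultimately show ?thesis using fold_other[OF dist_parts(1)[OF d kl]] by (simp add: upd_def)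
qed

lemma canal_B:
  assumes cw: "canalizing_word f i a w b"
  shows "k \<le> length w \<Longrightarrow> z i = a \<Longrightarrow> (\<forall>v\<in>set (take k w). z v = b v) \<Longrightarrow>
    fold (upd f) (take k w) z = z"
proof (induction k arbitrary: z)
  case 0
  then show ?case by simp
next
  case (Suc k)
  have kl: "k < length w" using Suc by simp
  have tk: "take (Suc k) w = take k w @ [w!k]" using kl by (simp add: take_Suc_conv_app_nth)
  have fz: "fold (upd f) (take k w) z = z" using Suc by (auto simp: tk)
  have "f z (w!k) = b (w!k)" using canal_step[OF cw kl, of z] Suc.prems fz by simp
  moreover have "z (w!k) = b (w!k)" using Suc.prems tk by simp
  moreover have "fold (upd f) (take (Suc k) w) z = upd f (w!k) z" by (simp add: tk fz)
  ultimately have "f z (w!k) = z (w!k)" "fold (upd f) (take (Suc k) w) z = upd f (w!k) z" by simp_all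
  moreover have "upd f (w!k) z = z" unfolding upd_def using calculation(1) by simp
  ultimately show ?case by simp
qed

lemma canal_C:
  assumes cw: "canalizing_word f i a w b" and kl: "k < length w"
    and "z i = a" "\<forall>v\<in>set (take k w). z v = b v"
  shows "f z (w!k) = b (w!k)"
proof -
  have "fold (upd f) (take k w) z = z" using canal_B[OF cw, of k z] assms kl by simp
  then show ?thesis using canal_step[OF cw kl, of z] assms by simp
qed

lemma path_snoc:
  assumes "is_path E vs ss" "j \<notin> set vs" "(last vs, j, s) \<in> E"
  shows "is_path E (vs @ [j]) (ss @ [s])"
  unfolding is_path_def
proof (intro conjI allI impI)
  show "vs @ [j] \<noteq> []" by simp
  show "distinct (vs @ [j])" using assms unfolding is_path_def by simp
  show "length (vs @ [j]) = Suc (length (ss @ [s]))" using assms unfolding is_path_def by simp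
  fix l assume l: "l < length (ss @ [s])"
  show "((vs @ [j]) ! l, (vs @ [j]) ! Suc l, (ss @ [s]) ! l) \<in> E"
  proof (cases "l < length ss")
    case True
    then show ?thesis using assms unfolding is_path_def by (auto simp: nth_append)
  next
    case False
    then have "l = length ss" using l by simp
    then show ?thesis using assms unfolding is_path_def by (auto simp: nth_append last_conv_nth)
  qed
qed

lemma internal_snoc:
  assumes "vs \<noteq> []"
  shows "internal_vertices (vs @ [j]) \<subseteq> internal_vertices vs \<union> {last vs}"
proof
  fix v assume "v \<in> internal_vertices (vs @ [j])"
  then obtain l where l: "v = (vs@[j]) ! l" "0 < l" "Suc l < length vs + 1"
    unfolding internal_vertices_def by auto
  show "v \<in> internal_vertices vs \<union> {last vs}"
  proof (cases "Suc l < length vs")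
    case True
    then show ?thesis using l unfolding internal_vertices_def by (auto simp: nth_append)
  next
    case False
    then have "l = length vs - 1" using l by simp
    then show ?thesis using l assms by (auto simp: nth_append last_conv_nth)
  qed
qed

lemma set_path:
  assumes "vs \<noteq> []"
  shows "set vs \<subseteq> {hd vs, last vs} \<union> internal_vertices vs"
proof
  fix v assume "v \<in> set vs"
  then obtain l where l: "l < length vs" "v = vs ! l" by (auto simp: in_set_conv_nth)
  show "v \<in> {hd vs, last vs} \<union> internal_vertices vs"
  proof (cases "l = 0")
    case True then show ?thesis using l assms by (simp add: hd_conv_nth)
  next
    case False
    show ?thesis
    proof (cases "Suc l < length vs")
      case True then show ?thesis using l False unfolding internal_vertices_def by auto
    next
      case F2: False
      then have "l = length vs - 1" using l by simp
      then show ?thesis using l assms by (simp add: last_conv_nth)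
    qed
  qed
qed

lemma main_D:
  fixes E :: "('v::finite) sdigraph" and f :: "'v bn"
  assumes bo: "bn_on f E"
    and cw: "canalizing_word f i a w b"
    and ns: "\<forall>k \<in> set w. \<not> is_source E k"
  shows "k < length w \<Longrightarrow> \<exists>vs ss. is_path E vs ss \<and> hd vs = i \<and> last vs = w!k \<and>
           internal_vertices vs \<subseteq> set (take k w) \<and>
           path_sign ss = (if a = b (w!k) then 1 else -1)"
proof (induction k rule: less_induct)
  case (less k)
  define j where "j = w!k"
  have d: "distinct w" and iw: "i \<notin> set w" using cw unfolding canalizing_word_def by auto
  have jw: "j \<in> set w" unfolding j_def using less.prems by simp
  have ij: "i \<noteq> j" using iw jw by auto
  define I where "I = insert i (set (take k w))"
  define c where "c = (\<lambda>v. if v = i then a else b v)"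
  have const: "f z j = b j" if "\<forall>v\<in>I. z v = c v" for z
  proof -
    have "z i = a" using that unfolding I_def c_def by simp
    moreover have "\<forall>v\<in>set (take k w). z v = b v" using that iw unfolding I_def c_def
      by (metis in_set_takeD insertCI)
    ultimately show ?thesis using canal_C[OF cw less.prems] unfolding j_def by simp
  qed
  obtain u s where "(u, j, s) \<in> E" using ns jw unfolding is_source_def by auto
  then have "(u, j, s) \<in> interaction_digraph f" using bo unfolding bn_on_def by simp
  then obtain x where "f x j \<noteq> f (x(u:=True)) j" unfolding interaction_digraph_def by auto
  then obtain z' where z': "f z' j \<noteq> b j" by metis
  define z where "z = (\<lambda>v. if v \<in> I then c v else z' v)"
  have "f z j = b j" using const unfolding z_def by simp
  from flip_find[of I z z' f j "b j", OF _ _ z' this]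
  obtain l y where l: "l \<in> I" and y: "f y j \<noteq> b j" "f (y(l := z l)) j = b j"
    unfolding I_def z_def by auto
  have zl: "z l = c l" using l unfolding z_def by simp
  have ie: "interaction_digraph f = E" using bo unfolding bn_on_def .
  have arc: "(l, j, if c l = b j then 1 else -1) \<in> E"
    using arc_from_flip[of f y j "b j" l "z l", OF y] unfolding zl ie .
  show ?case
  proof (cases "l = i")
    case True
    have cli: "c l = a" using True unfolding c_def by simp
    have arc': "(i, j, if c l = b j then 1 else -1) \<in> E" using arc True by simp
    have A1: "is_path E [i, j] [if c l = b j then 1 else -1]" by (rule path2[OF arc' ij])
    have A3: "path_sign [if c l = b j then 1 else -1] = (if a = b (w!k) then 1 else -1)"
      unfolding path_sign_def cli j_def[symmetric] by (simp only: prod_list.Cons prod_list.Nil mult_1_right)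
    show ?thesis
    proof (intro exI conjI)
      show "is_path E [i, j] [if c l = b j then 1 else -1]" by (rule A1)
      show "hd [i, j] = i" by simp
      show "last [i, j] = w!k" unfolding j_def by simp
      show "internal_vertices [i, j] \<subseteq> set (take k w)" by (simp add: internal2)
      show "path_sign [if c l = b j then 1 else -1] = (if a = b (w!k) then 1 else -1)" by (rule A3)
    qed
  next
    case False
    then have "l \<in> set (take k w)" using l unfolding I_def by simp
    then obtain m where m: "m < k" "l = w!m"
      using less.prems by (auto simp: in_set_conv_nth)
    have ml: "m < length w" using m less.prems by simp
    obtain vs ss where p: "is_path E vs ss" "hd vs = i" "last vs = w!m"
      "internal_vertices vs \<subseteq> set (take m w)"
      "path_sign ss = (if a = b (w!m) then 1 else -1)"
      using less.IH[OF m(1) ml] by blast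
    have vne: "vs \<noteq> []" using p unfolding is_path_def by simp
    have jm: "j \<noteq> w!m" unfolding j_def using d m less.prems by (simp add: nth_eq_iff_index_eq)
    have "j \<notin> set (take m w)"
    proof
      assume "j \<in> set (take m w)"
      then obtain r where "r < m" "j = w!r" using ml by (auto simp: in_set_conv_nth)
      then show False unfolding j_def using d m less.prems by (simp add: nth_eq_iff_index_eq)
    qed
    then have jn: "j \<notin> set vs" using set_path[OF vne] p ij jm by auto
    have cl: "c l = b l" using False unfolding c_def by simp
    have P: "is_path E (vs @ [j]) (ss @ [if c l = b j then 1 else -1])"
      using path_snoc[OF p(1) jn] arc p m by simp
    have "set (take m w) \<subseteq> set (take k w)" using m by (metis set_take_subset_set_take less_imp_le)
    moreover have "w!m \<in> set (take k w)" using m less.prems by (metis \<open>l \<in> set (take k w)\<close>)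
    ultimately have IV: "internal_vertices (vs @ [j]) \<subseteq> set (take k w)"
      using internal_snoc[OF vne, of j] p by auto
    have S: "path_sign (ss @ [if c l = b j then 1 else -1]) = (if a = b j then 1 else -1)"
    proof -
      have ps: "prod_list ss = (if a = b l then 1 else -1)" using p(5) unfolding path_sign_def m(2) .
      have "path_sign (ss @ [if c l = b j then 1 else -1]) = prod_list ss * (if b l = b j then 1 else -1)"
        unfolding path_sign_def cl by simp
      also have "\<dots> = (if a = b j then 1 else -1)" unfolding ps by (rule sgn_aux)
      finally show ?thesis .
    qed
    have H: "hd (vs @ [j]) = i" "last (vs @ [j]) = w!k" using p vne unfolding j_def by auto
    show ?thesis
    proof (intro exI conjI)
      show "is_path E (vs @ [j]) (ss @ [if c l = b j then 1 else -1])" by (rule P)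
      show "hd (vs @ [j]) = i" by (rule H(1))
      show "last (vs @ [j]) = w!k" by (rule H(2))
      show "internal_vertices (vs @ [j]) \<subseteq> set (take k w)" by (rule IV)
      show "path_sign (ss @ [if c l = b j then 1 else -1]) = (if a = b (w!k) then 1 else -1)"
        using S unfolding j_def .
    qed
  qed
qed

theorem lemma6:
  fixes E :: "('v::finite) sdigraph" and f :: "'v bn"
    and i :: 'v and a :: bool and w :: "'v list" and b :: "'v config"
  assumes "signed_digraph E"
    and "bn_on f E"
    and "canalizing_word f i a w b"
    and "\<forall>k \<in> set w. \<not> is_source E k"
  shows "\<forall>j \<in> set w. \<exists>vs ss. is_path E vs ss \<and> hd vs = i \<and> last vs = j \<and>
           internal_vertices vs \<subseteq> set w \<and>
           path_sign ss = (if a = b j then 1 else -1)"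
proof
  fix j assume "j \<in> set w"
  then obtain k where k: "k < length w" "j = w!k" by (auto simp: in_set_conv_nth)
  from main_D[OF assms(2,3,4) k(1)] show "\<exists>vs ss. is_path E vs ss \<and> hd vs = i \<and> last vs = j \<and>
           internal_vertices vs \<subseteq> set w \<and>
           path_sign ss = (if a = b j then 1 else -1)"
    using k set_take_subset[of k w] by blast
qed

end
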